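(* Consider the additive noise SCM with two treatments \[ X_1 = U_1,\qquad X_2 = f_2(X_1)+U_2,\qquad Y = f_Y(X_1,X_2)+U_Y, \] where $f_2:\mathbb R\to\mathbb R$, $f_Y:\mathbb R^2\to\mathbb R$ are continuous and $(U_1,U_2,U_Y)\sim\mathcal N(\mathbf 0,\Sigma)$ with $\Sigma$ positive definite. For $x_1,x_2\in\mathbb R$ let $g(x_1,x_2):=\mathbb E[Y\mid X_1=x_1, do(X_2=x_2)]$ denote the conditional expectation of $Y$ given $X_1=x_1$ in the model intervened by $do(X_2=x_2)$. Then for every $x_1\in\mathbb R$, \[ \mathbb E_{u_2\sim p(U_2)}\big[g(x_1, f_2(x_1)+u_2)\big] - \mathbb E[Y\mid do(X_1=x_1)] = \mathbb E[U_Y\mid U_1=x_1] = \frac{\sigma_{Y1}}{\sigma_{11}}\,x_1, \] where $p(U_2)$ is the marginal distribution of $U_2$, $\sigma_{Y1}=\mathrm{Cov}(U_Y,U_1)$ and $\sigma_{11}=\mathrm{Var}(U_1)$. Moreover $f_2(x_1)=\mathbb E[X_2\mid do(X_1=x_1)]$, so that every quantity on the left-hand side is determined by the observational distribution and the single-variable interventional distributions under $do(X_1=\cdot)$ and $do(X_2=\cdot)$.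
   Context: A perfect intervention $do(X_i=x)$ replaces the structural equation of $X_i$ by the constant $x$ and leaves all other equations and the noise distribution unchanged; $\mathbb E[\cdot\mid do(\cdot)]$ denotes expectation in the intervened model. The noise variables may be correlated (hidden confounding). *)

theory Defs
  imports "HOL-Analysis.Analysis"
begin

text \<open>Noise vector (U1, U2, UY) is represented as a triple (u1, u2, uy) :: real \<times> real \<times> real.
  The covariance matrix Sigma is a 3x3 real matrix indexed by 1 (U1), 2 (U2), 3 (UY),
  matching the components of vector [u1, u2, uy].\<close>

definition pos_definite :: "real^3^3 \<Rightarrow> bool" where
  "pos_definite S \<longleftrightarrow> transpose S = S \<and> (\<forall>x::real^3. x \<noteq> 0 \<longrightarrow> 0 < x \<bullet> (S *v x))"

definition gauss_dens :: "real^3^3 \<Rightarrow> real \<times> real \<times> real \<Rightarrow> real" where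
  "gauss_dens S u = (case u of (a, b, c) \<Rightarrow>
     (let v = (vector [a, b, c] :: real^3)
      in exp (- (v \<bullet> (matrix_inv S *v v)) / 2) / sqrt ((2 * pi) ^ 3 * det S)))"

definition noise :: "real^3^3 \<Rightarrow> (real \<times> real \<times> real) measure" where
  "noise S = density lborel (\<lambda>u. ennreal (gauss_dens S u))"

definition cond_exp_U1 :: "real^3^3 \<Rightarrow> (real \<times> real \<times> real \<Rightarrow> real) \<Rightarrow> real \<Rightarrow> real" where
  "cond_exp_U1 S h x1 =
     (\<integral>w. h (x1, w) * gauss_dens S (x1, w) \<partial>(lborel :: (real \<times> real) measure)) /
     (\<integral>w. gauss_dens S (x1, w) \<partial>(lborel :: (real \<times> real) measure))"

definition X2_do1 :: "(real \<Rightarrow> real) \<Rightarrow> real \<Rightarrow> real \<times> real \<times> real \<Rightarrow> real" where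
  "X2_do1 f2 x1 u = (case u of (u1, u2, uy) \<Rightarrow> f2 x1 + u2)"

definition Y_do1 :: "(real \<Rightarrow> real) \<Rightarrow> (real \<times> real \<Rightarrow> real) \<Rightarrow> real \<Rightarrow> real \<times> real \<times> real \<Rightarrow> real" where
  "Y_do1 f2 fY x1 u = (case u of (u1, u2, uy) \<Rightarrow> fY (x1, X2_do1 f2 x1 u) + uy)"

definition X1_do2 :: "real \<times> real \<times> real \<Rightarrow> real" where
  "X1_do2 u = (case u of (u1, u2, uy) \<Rightarrow> u1)"

definition Y_do2 :: "(real \<times> real \<Rightarrow> real) \<Rightarrow> real \<Rightarrow> real \<times> real \<times> real \<Rightarrow> real" where
  "Y_do2 fY x2 u = (case u of (u1, u2, uy) \<Rightarrow> fY (X1_do2 u, x2) + uy)"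

text \<open>g(x1, x2) = E[Y | X1 = x1, do(X2 = x2)]; since X1 = U1 in that model, conditioning
  on X1 = x1 is conditioning on U1 = x1.\<close>
definition g_cond :: "real^3^3 \<Rightarrow> (real \<times> real \<Rightarrow> real) \<Rightarrow> real \<Rightarrow> real \<Rightarrow> real" where
  "g_cond S fY x1 x2 = cond_exp_U1 S (Y_do2 fY x2) x1"

end

theory Submission
  imports Defs "HOL-Probability.Probability"
begin


lemma quad3: "(vector [a,b,c] :: real^3) \<bullet> ((P::real^3^3) *v vector [a,b,c]) =
   a*(P$1$1*a + P$1$2*b + P$1$3*c) + b*(P$2$1*a + P$2$2*b + P$2$3*c) + c*(P$3$1*a+P$3$2*b+P$3$3*c)"
  by (simp add: inner_vec_def matrix_vector_mult_def sum_3 algebra_simps)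

lemma matrix_facts:
  assumes pd: "pos_definite S"
  defines "P \<equiv> matrix_inv S"
  shows "S ** P = mat 1" "P ** S = mat 1" "transpose P = P"
    "\<And>x. x \<noteq> 0 \<Longrightarrow> 0 < x \<bullet> (P *v x)" "det S * det P = 1"
proof -
  have symS: "transpose S = S" and pos: "\<And>x. x \<noteq> 0 \<Longrightarrow> 0 < x \<bullet> (S *v x)"
    using pd unfolding pos_definite_def by auto
  have "\<forall>x. S *v x = 0 \<longrightarrow> x = 0"
  proof (intro allI impI)
    fix x assume "S *v x = 0"
    then have "x \<bullet> (S *v x) = 0" by simp
    then show "x = 0" using pos by (metis less_irrefl)
  qed
  then have "invertible S" using invertible_left_inverse matrix_left_invertible_ker by blast
  then have inv: "S ** P = mat 1 \<and> P ** S = mat 1"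
    unfolding P_def matrix_inv_def invertible_def by (rule someI_ex)
  then show SP: "S ** P = mat 1" and PS: "P ** S = mat 1" by auto
  have "transpose P ** S = mat 1"
    by (metis SP matrix_transpose_mul symS transpose_mat)
  then have "transpose P = transpose P ** (S ** P)" by (simp add: SP)
  also have "\<dots> = P" by (metis \<open>transpose P ** S = mat 1\<close> matrix_mul_assoc matrix_mul_lid)
  finally show "transpose P = P" .
  show "det S * det P = 1" by (metis SP det_I det_mul)
  fix x :: "real^3" assume x: "x \<noteq> 0"
  let ?y = "P *v x"
  have Sy: "S *v ?y = x" by (simp add: SP matrix_vector_mul_assoc)
  then have "?y \<noteq> 0" using x by auto
  then have "0 < ?y \<bullet> (S *v ?y)" by (rule pos)
  then show "0 < x \<bullet> (P *v x)" by (simp add: Sy inner_commute)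
qed

lemma scalar_facts:
  assumes pd: "pos_definite S"
  defines "P \<equiv> matrix_inv S"
  defines "p11 \<equiv> P$1$1" and "p12 \<equiv> P$1$2" and "p13 \<equiv> P$1$3"
    and "p22 \<equiv> P$2$2" and "p23 \<equiv> P$2$3" and "p33 \<equiv> P$3$3"
  defines "D \<equiv> p22*p33 - p23^2"
  defines "\<Delta> \<equiv> p11*D - p12*(p12*p33 - p13*p23) + p13*(p12*p23 - p13*p22)"
  shows "\<And>a b c. (vector [a,b,c] :: real^3) \<bullet> (P *v vector [a,b,c]) =
           p11*a^2 + p22*b^2 + p33*c^2 + 2*p12*a*b + 2*p13*a*c + 2*p23*b*c"
    "0 < p33" "0 < D" "0 < \<Delta>" "det S = 1/\<Delta>" "0 < S$1$1"
    "S$3$1 * D = S$1$1 * (p12*p23 - p13*p22)"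
proof -
  note mf = matrix_facts[OF pd, folded P_def]
  have pos: "\<And>x. x \<noteq> 0 \<Longrightarrow> 0 < x \<bullet> (P *v x)" by (rule mf(4))
  have "(transpose P)$2$1 = P$2$1" "(transpose P)$3$1 = P$3$1" "(transpose P)$3$2 = P$3$2"
    using mf(3) by simp_all
  then have s21: "P$2$1 = p12" and s31: "P$3$1 = p13" and s32: "P$3$2 = p23"
    by (simp_all add: transpose_def p12_def p13_def p23_def)
  show Q: "\<And>a b c. (vector [a,b,c] :: real^3) \<bullet> (P *v vector [a,b,c]) =
           p11*a^2 + p22*b^2 + p33*c^2 + 2*p12*a*b + 2*p13*a*c + 2*p23*b*c"
    unfolding quad3 s21 s31 s32 by (simp add: p11_def p12_def p13_def p22_def p23_def p33_def power2_eq_square algebra_simps)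
  have nz: "\<And>a b c. a \<noteq> 0 \<or> b \<noteq> 0 \<or> c \<noteq> 0 \<Longrightarrow> (vector [a,b,c] :: real^3) \<noteq> 0"
    by (metis vector_3 zero_index)
  have "0 < (vector [0,0,1] :: real^3) \<bullet> (P *v vector [0,0,1])" by (rule pos, rule nz, simp)
  then show p33: "0 < p33" unfolding Q by simp
  have "0 < (vector [0,p33,-p23] :: real^3) \<bullet> (P *v vector [0,p33,-p23])" by (rule pos, rule nz, use p33 in simp)
  then have "0 < p33 * D" unfolding Q D_def by (simp add: power2_eq_square algebra_simps)
  then show D: "0 < D" using p33 by (simp add: zero_less_mult_iff)
  have "0 < (vector [D, p23*p13 - p12*p33, p12*p23 - p22*p13] :: real^3) \<bullet> (P *v vector [D, p23*p13 - p12*p33, p12*p23 - p22*p13])"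
    by (rule pos, rule nz, use D in simp)
  then have "0 < D * \<Delta>" unfolding Q D_def \<Delta>_def by (simp add: power2_eq_square algebra_simps)
  then show Dl: "0 < \<Delta>" using D by (simp add: zero_less_mult_iff)
  have "det P = \<Delta>" unfolding det_3 s21 s31 s32 by (simp add: \<Delta>_def D_def p11_def p12_def p13_def p22_def p23_def p33_def power2_eq_square algebra_simps)
  then show "det S = 1/\<Delta>" using mf(5) Dl by (simp add: field_simps)
  have "0 < (vector [1,0,0] :: real^3) \<bullet> (S *v vector [1,0,0])"
    using pd unfolding pos_definite_def by (metis nz one_neq_zero)
  then show "0 < S$1$1" by (simp add: inner_vec_def matrix_vector_mult_def sum_3)
  have "(P ** S)$2$1 = 0" "(P ** S)$3$1 = 0" using mf(2) by (simp_all add: mat_def)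
  then have e2: "p12 * S$1$1 + p22 * S$2$1 + p23 * S$3$1 = 0"
    and e3: "p13 * S$1$1 + p23 * S$2$1 + p33 * S$3$1 = 0"
    unfolding matrix_matrix_mult_def sum_3 by (simp_all add: s21 s31 s32 p22_def p23_def p33_def)
  show "S$3$1 * D = S$1$1 * (p12*p23 - p13*p22)"
  proof -
    have "p23 * (p12 * S$1$1 + p22 * S$2$1 + p23 * S$3$1) - p22 * (p13 * S$1$1 + p23 * S$2$1 + p33 * S$3$1) = 0"
      using e2 e3 by simp
    then show ?thesis unfolding D_def by (simp add: power2_eq_square algebra_simps)
  qed
qed



lemma nd_alt: "0 < p \<Longrightarrow> normal_density m (1/sqrt p) x = sqrt (p/(2*pi)) * exp (-(p*(x-m)^2)/2)"
  by (simp add: normal_density_def power_divide real_sqrt_divide field_simps)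

lemma eQ:
  fixes p11 p12 p13 p22 p23 p33 :: real
  assumes "0 < p33" "0 < D" "D = p22*p33 - p23^2"
    "\<Delta> = p11*D - p12*(p12*p33 - p13*p23) + p13*(p12*p23 - p13*p22)"
  shows "(\<Delta>/D)*a^2 + (D/p33)*(b - (-(p12*p33 - p13*p23)/D)*a)^2 + p33*(c - (-p13/p33)*a - (-p23/p33)*b)^2
     = p11*a^2 + p22*b^2 + p33*c^2 + 2*p12*a*b + 2*p13*a*c + 2*p23*b*c"
  using assms by (simp add: field_simps power2_eq_square) algebra

lemma sq3:
  assumes "0 < p33" "0 < D" "0 < \<Delta>"
  shows "sqrt ((\<Delta>/D)/(2*pi)) * (sqrt ((D/p33)/(2*pi)) * sqrt (p33/(2*pi))) = 1 / sqrt ((2*pi)^3 * (1/\<Delta>))"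
proof -
  have "sqrt ((\<Delta>/D)/(2*pi)) * (sqrt ((D/p33)/(2*pi)) * sqrt (p33/(2*pi))) = sqrt (((\<Delta>/D)/(2*pi)) * ((D/p33)/(2*pi)) * (p33/(2*pi)))"
    by (simp only: real_sqrt_mult mult.assoc)
  also have "((\<Delta>/D)/(2*pi)) * ((D/p33)/(2*pi)) * (p33/(2*pi)) = 1 / ((2*pi)^3 * (1/\<Delta>))"
    using assms by (simp add: field_simps power3_eq_cube)
  finally show ?thesis by (simp add: real_sqrt_divide)
qed

lemma gauss_factor:
  assumes pd: "pos_definite S"
  shows "\<exists>s1 s2 s3 k2 l1 l2. 0 < s1 \<and> 0 < s2 \<and> 0 < s3 \<and>
     (\<forall>a b c. gauss_dens S (a,b,c) = normal_density 0 s1 a * (normal_density (k2*a) s2 b * normal_density (l1*a+l2*b) s3 c))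
     \<and> l1 + l2*k2 = S$3$1 / S$1$1"
proof -
  define P where "P = matrix_inv S"
  define p11 where "p11 = P$1$1"
  define p12 where "p12 = P$1$2"
  define p13 where "p13 = P$1$3"
  define p22 where "p22 = P$2$2"
  define p23 where "p23 = P$2$3"
  define p33 where "p33 = P$3$3"
  define D where "D = p22*p33 - p23^2"
  define \<Delta> where "\<Delta> = p11*D - p12*(p12*p33 - p13*p23) + p13*(p12*p23 - p13*p22)"
  note sf = scalar_facts[OF pd, folded P_def, folded p11_def p12_def p13_def p22_def p23_def p33_def, folded D_def, folded \<Delta>_def]
  have p33: "0 < p33" and D: "0 < D" and Dl: "0 < \<Delta>" using sf by auto
  define k2 where "k2 = -(p12*p33 - p13*p23)/D"
  define l1 where "l1 = -p13/p33"
  define l2 where "l2 = -p23/p33"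
  have r1: "0 < \<Delta>/D" and r2: "0 < D/p33" using p33 D Dl by auto
  have fac: "gauss_dens S (a,b,c) = normal_density 0 (1/sqrt (\<Delta>/D)) a * (normal_density (k2*a) (1/sqrt (D/p33)) b * normal_density (l1*a+l2*b) (1/sqrt p33) c)" for a b c
  proof -
    have Qe: "(vector [a,b,c] :: real^3) \<bullet> (P *v vector [a,b,c]) = (\<Delta>/D)*a^2 + (D/p33)*(b - k2*a)^2 + p33*(c - l1*a - l2*b)^2"
      unfolding sf(1) k2_def l1_def l2_def
      by (rule eQ[symmetric]) (use p33 D in \<open>auto simp: D_def \<Delta>_def\<close>)
    have "normal_density 0 (1/sqrt (\<Delta>/D)) a * (normal_density (k2*a) (1/sqrt (D/p33)) b * normal_density (l1*a+l2*b) (1/sqrt p33) c)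
      = (sqrt ((\<Delta>/D)/(2*pi)) * (sqrt ((D/p33)/(2*pi)) * sqrt (p33/(2*pi)))) *
        (exp (-((\<Delta>/D)*(a-0)^2)/2) * exp (-((D/p33)*(b - k2*a)^2)/2) * exp (-(p33*(c - (l1*a+l2*b))^2)/2))"
      unfolding nd_alt[OF r1] nd_alt[OF r2] nd_alt[OF p33] by (simp add: algebra_simps)
    also have "\<dots> = exp (- ((vector [a,b,c] :: real^3) \<bullet> (P *v vector [a,b,c])) / 2) / sqrt ((2*pi)^3 * det S)"
      unfolding sq3[OF p33 D Dl] Qe sf(5) by (simp add: exp_add[symmetric] algebra_simps diff_divide_distrib add_divide_distrib)
    finally show ?thesis by (simp add: gauss_dens_def P_def Let_def)
  qed
  have "l1 + l2*k2 = (p12*p23 - p13*p22)/D"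
    unfolding l1_def l2_def k2_def using p33 D by (simp add: field_simps D_def power2_eq_square)
  also have "\<dots> = S$3$1 / S$1$1" using sf(6,7) D by (simp add: field_simps)
  finally show ?thesis using fac r1 r2 p33 by (intro exI[of _ "1/sqrt (\<Delta>/D)"] exI[of _ "1/sqrt (D/p33)"] exI[of _ "1/sqrt p33"] exI[of _ k2] exI[of _ l1] exI[of _ l2]) auto
qed



lemma nd_abs:
  assumes s: "0 < s"
  shows "integrable lborel (\<lambda>x. normal_density m s x * \<bar>x\<bar>)"
    "(\<integral>x. normal_density m s x * \<bar>x\<bar> \<partial>lborel) \<le> \<bar>m\<bar> + s"
proof -
  have pw: "normal_density m s x * \<bar>x\<bar> \<le> \<bar>m\<bar> * normal_density m s x + normal_density m s x * \<bar>x - m\<bar>" for x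
  proof -
    have "\<bar>x\<bar> \<le> \<bar>m\<bar> + \<bar>x - m\<bar>" by linarith
    then have "normal_density m s x * \<bar>x\<bar> \<le> normal_density m s x * (\<bar>m\<bar> + \<bar>x - m\<bar>)"
      by (rule mult_left_mono) simp
    then show ?thesis by (simp add: algebra_simps)
  qed
  have i1: "integrable lborel (\<lambda>x. normal_density m s x * \<bar>x - m\<bar>^1)"
    by (rule integrable_normal_moment_abs[OF s])
  have i2: "integrable lborel (\<lambda>x. \<bar>m\<bar> * normal_density m s x + normal_density m s x * \<bar>x - m\<bar>^1)"
    using i1 s by (intro Bochner_Integration.integrable_add) auto
  show i3: "integrable lborel (\<lambda>x. normal_density m s x * \<bar>x\<bar>)"
    apply (rule Bochner_Integration.integrable_bound[OF i2])
     apply (simp add: normal_density_def[abs_def])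
    apply (rule AE_I2)
    using pw by (simp add: abs_mult)
  have "(\<integral>x. normal_density m s x * \<bar>x\<bar> \<partial>lborel) \<le> (\<integral>x. \<bar>m\<bar> * normal_density m s x + normal_density m s x * \<bar>x - m\<bar>^1 \<partial>lborel)"
    by (rule integral_mono[OF i3 i2]) (use pw in simp)
  also have "\<dots> = \<bar>m\<bar> + s * sqrt (2/pi)"
    using integral_normal_moment_abs_odd[OF s, of m 0] s i1
    by (subst Bochner_Integration.integral_add) auto
  also have "\<dots> \<le> \<bar>m\<bar> + s"
  proof -
    have "sqrt (2/pi) \<le> 1" using pi_gt3 by (simp add: real_sqrt_le_1_iff)
    then show ?thesis using s by (simp add: mult_left_le)
  qed
  finally show "(\<integral>x. normal_density m s x * \<bar>x\<bar> \<partial>lborel) \<le> \<bar>m\<bar> + s" .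
qed

lemma layer:
  fixes K :: "real \<Rightarrow> 'b \<Rightarrow> real" and M :: "'b measure"
  assumes sf: "sigma_finite_measure M" and s: "0 < s"
    and meas: "(\<lambda>(x,y). K x y) \<in> borel_measurable (lborel \<Otimes>\<^sub>M M)"
    and int: "\<And>x. integrable M (K x)"
    and bnd: "\<And>x. (\<integral>y. \<bar>K x y\<bar> \<partial>M) \<le> A + B*\<bar>x\<bar>" and B: "0 \<le> B"
    and val: "\<And>x. (\<integral>y. K x y \<partial>M) = C + D*x"
  shows "integrable (lborel \<Otimes>\<^sub>M M) (\<lambda>(x,y). normal_density m s x * K x y)"
    "integral\<^sup>L (lborel \<Otimes>\<^sub>M M) (\<lambda>(x,y). normal_density m s x * K x y) = C + D*m"
    "(\<integral>z. \<bar>(\<lambda>(x,y). normal_density m s x * K x y) z\<bar> \<partial>(lborel \<Otimes>\<^sub>M M)) \<le> A + B*(\<bar>m\<bar> + s)"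
proof -
  interpret sigma_finite_measure M by (rule sf)
  interpret pair_sigma_finite lborel M by unfold_locales
  let ?f = "\<lambda>(x,y). normal_density m s x * K x y"
  have fm: "?f \<in> borel_measurable (lborel \<Otimes>\<^sub>M M)"
    using meas by (measurable)
  have absK: "(\<lambda>(x,y). \<bar>K x y\<bar>) \<in> borel_measurable (lborel \<Otimes>\<^sub>M M)"
    using meas by measurable
  have hm: "(\<lambda>x. \<integral>y. \<bar>K x y\<bar> \<partial>M) \<in> borel_measurable lborel"
    by (rule sigma_finite_measure.borel_measurable_lebesgue_integral[OF sf, of "\<lambda>x y. \<bar>K x y\<bar>" lborel]) (use absK in simp)
  have nnI: "\<And>x. 0 \<le> (\<integral>y. \<bar>K x y\<bar> \<partial>M)" by simp
  have nI: "(\<integral>y. norm (?f (x,y)) \<partial>M) = normal_density m s x * (\<integral>y. \<bar>K x y\<bar> \<partial>M)" for x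
    by (simp add: abs_mult)
  have dom: "integrable lborel (\<lambda>x. A * normal_density m s x + B * (normal_density m s x * \<bar>x\<bar>))"
    using nd_abs[OF s] s by (intro Bochner_Integration.integrable_add integrable_mult_right) auto
  have pw: "normal_density m s x * (\<integral>y. \<bar>K x y\<bar> \<partial>M) \<le> A * normal_density m s x + B * (normal_density m s x * \<bar>x\<bar>)" for x
  proof -
    have "normal_density m s x * (\<integral>y. \<bar>K x y\<bar> \<partial>M) \<le> normal_density m s x * (A + B*\<bar>x\<bar>)"
      by (rule mult_left_mono[OF bnd]) simp
    then show ?thesis by (simp add: algebra_simps)
  qed
  have i1: "integrable lborel (\<lambda>x. \<integral>y. norm (?f (x,y)) \<partial>M)"
    unfolding nI
  proof (rule Bochner_Integration.integrable_bound[OF dom])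
    show "(\<lambda>x. normal_density m s x * (\<integral>y. \<bar>K x y\<bar> \<partial>M)) \<in> borel_measurable lborel"
      using hm by (intro borel_measurable_times) (auto simp: normal_density_def[abs_def])
    show "AE x in lborel. norm (normal_density m s x * (\<integral>y. \<bar>K x y\<bar> \<partial>M))
        \<le> norm (A * normal_density m s x + B * (normal_density m s x * \<bar>x\<bar>))"
    proof (rule AE_I2)
      fix x
      have "0 \<le> normal_density m s x * (\<integral>y. \<bar>K x y\<bar> \<partial>M)" by simp
      then show "norm (normal_density m s x * (\<integral>y. \<bar>K x y\<bar> \<partial>M))
        \<le> norm (A * normal_density m s x + B * (normal_density m s x * \<bar>x\<bar>))"
        using pw[of x] by simp
    qed
  qed
  have i2: "AE x in lborel. integrable M (\<lambda>y. ?f (x,y))"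
    using int by (auto intro!: integrable_mult_right)
  show fi: "integrable (lborel \<Otimes>\<^sub>M M) ?f" by (rule Fubini_integrable[OF fm i1 i2])
  have "integral\<^sup>L (lborel \<Otimes>\<^sub>M M) ?f = (\<integral>x. (\<integral>y. ?f (x,y) \<partial>M) \<partial>lborel)"
    by (rule integral_fst'[OF fi, symmetric])
  also have "\<dots> = (\<integral>x. C * normal_density m s x + D * (normal_density m s x * x) \<partial>lborel)"
    by (simp add: val algebra_simps)
  also have "\<dots> = C + D*m"
    using integral_normal_moment_nz_1[OF s] integrable_normal_moment_nz_1[OF s] s
    by (subst Bochner_Integration.integral_add) auto
  finally show "integral\<^sup>L (lborel \<Otimes>\<^sub>M M) ?f = C + D*m" .
  have fa: "integrable (lborel \<Otimes>\<^sub>M M) (\<lambda>z. \<bar>?f z\<bar>)" using fi by (rule integrable_abs)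
  have "(\<integral>z. \<bar>?f z\<bar> \<partial>(lborel \<Otimes>\<^sub>M M)) = (\<integral>x. (\<integral>y. \<bar>?f (x,y)\<bar> \<partial>M) \<partial>lborel)"
    by (rule integral_fst'[OF fa, symmetric])
  also have "\<dots> = (\<integral>x. normal_density m s x * (\<integral>y. \<bar>K x y\<bar> \<partial>M) \<partial>lborel)"
    using nI by simp
  also have "\<dots> \<le> (\<integral>x. A * normal_density m s x + B * (normal_density m s x * \<bar>x\<bar>) \<partial>lborel)"
    apply (rule integral_mono[OF _ dom pw])
    using i1 unfolding nI .
  also have "\<dots> = A + B * (\<integral>x. normal_density m s x * \<bar>x\<bar> \<partial>lborel)"
    using nd_abs[OF s] s by (subst Bochner_Integration.integral_add) auto
  also have "\<dots> \<le> A + B*(\<bar>m\<bar> + s)"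
    using nd_abs(2)[OF s, of m] B by (simp add: mult_left_mono)
  finally show "(\<integral>z. \<bar>?f z\<bar> \<partial>(lborel \<Otimes>\<^sub>M M)) \<le> A + B*(\<bar>m\<bar> + s)" .
qed

lemma sf_lborel2: "sigma_finite_measure (lborel \<Otimes>\<^sub>M (lborel :: real measure))"
  by (metis lborel.sigma_finite_measure_axioms lborel_prod)

lemma two_d:
  assumes s2: "0 < s2" and s3: "0 < s3"
  shows "integrable (lborel \<Otimes>\<^sub>M lborel) (\<lambda>(x,y). normal_density \<mu> s2 x * normal_density (\<alpha>+\<beta>*x) s3 y)"
    "integral\<^sup>L (lborel \<Otimes>\<^sub>M lborel) (\<lambda>(x,y). normal_density \<mu> s2 x * normal_density (\<alpha>+\<beta>*x) s3 y) = 1"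
    "(\<integral>z. \<bar>(\<lambda>(x,y). normal_density \<mu> s2 x * normal_density (\<alpha>+\<beta>*x) s3 y) z\<bar> \<partial>(lborel \<Otimes>\<^sub>M lborel)) \<le> 1"
    "integrable (lborel \<Otimes>\<^sub>M lborel) (\<lambda>(x,y). normal_density \<mu> s2 x * (x * normal_density (\<alpha>+\<beta>*x) s3 y))"
    "integral\<^sup>L (lborel \<Otimes>\<^sub>M lborel) (\<lambda>(x,y). normal_density \<mu> s2 x * (x * normal_density (\<alpha>+\<beta>*x) s3 y)) = \<mu>"
    "(\<integral>z. \<bar>(\<lambda>(x,y). normal_density \<mu> s2 x * (x * normal_density (\<alpha>+\<beta>*x) s3 y)) z\<bar> \<partial>(lborel \<Otimes>\<^sub>M lborel)) \<le> s2 + 1*\<bar>\<mu>\<bar>"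
    "integrable (lborel \<Otimes>\<^sub>M lborel) (\<lambda>(x,y). normal_density \<mu> s2 x * (normal_density (\<alpha>+\<beta>*x) s3 y * y))"
    "integral\<^sup>L (lborel \<Otimes>\<^sub>M lborel) (\<lambda>(x,y). normal_density \<mu> s2 x * (normal_density (\<alpha>+\<beta>*x) s3 y * y)) = \<alpha> + \<beta>*\<mu>"
    "(\<integral>z. \<bar>(\<lambda>(x,y). normal_density \<mu> s2 x * (normal_density (\<alpha>+\<beta>*x) s3 y * y)) z\<bar> \<partial>(lborel \<Otimes>\<^sub>M lborel)) \<le> (\<bar>\<alpha>\<bar> + s3 + \<bar>\<beta>\<bar> * s2) + \<bar>\<beta>\<bar>*\<bar>\<mu>\<bar>"
proof -
  have sfl: "sigma_finite_measure (lborel :: real measure)" by (rule lborel.sigma_finite_measure_axioms)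
  note L = layer[OF sfl s2]
  have m1: "(\<lambda>(x,y). normal_density (\<alpha>+\<beta>*x) s3 y) \<in> borel_measurable (lborel \<Otimes>\<^sub>M lborel)"
    unfolding normal_density_def by measurable
  have i1: "\<And>x. integrable lborel (normal_density (\<alpha>+\<beta>*x) s3)" using s3 by simp
  have v1: "\<And>x. (\<integral>y. normal_density (\<alpha>+\<beta>*x) s3 y \<partial>lborel) = 1 + 0*x" using s3 by simp
  have b1: "\<And>x. (\<integral>y. \<bar>normal_density (\<alpha>+\<beta>*x) s3 y\<bar> \<partial>lborel) \<le> 1 + 0*\<bar>x\<bar>" using s3 by simp
  note R1 = L[OF m1 i1 b1 _ v1, simplified]
  show "integrable (lborel \<Otimes>\<^sub>M lborel) (\<lambda>(x,y). normal_density \<mu> s2 x * normal_density (\<alpha>+\<beta>*x) s3 y)"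
    "integral\<^sup>L (lborel \<Otimes>\<^sub>M lborel) (\<lambda>(x,y). normal_density \<mu> s2 x * normal_density (\<alpha>+\<beta>*x) s3 y) = 1"
    "(\<integral>z. \<bar>(\<lambda>(x,y). normal_density \<mu> s2 x * normal_density (\<alpha>+\<beta>*x) s3 y) z\<bar> \<partial>(lborel \<Otimes>\<^sub>M lborel)) \<le> 1"
    using R1 by auto
  have m2: "(\<lambda>(x,y). x * normal_density (\<alpha>+\<beta>*x) s3 y) \<in> borel_measurable (lborel \<Otimes>\<^sub>M lborel)"
    unfolding normal_density_def by measurable
  have i2: "\<And>x. integrable lborel (\<lambda>y. x * normal_density (\<alpha>+\<beta>*x) s3 y)" using s3 by simp
  have v2: "\<And>x. (\<integral>y. x * normal_density (\<alpha>+\<beta>*x) s3 y \<partial>lborel) = 0 + 1*x" using s3 by simp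
  have b2: "\<And>x. (\<integral>y. \<bar>x * normal_density (\<alpha>+\<beta>*x) s3 y\<bar> \<partial>lborel) \<le> 0 + 1*\<bar>x\<bar>" using s3 by (simp add: abs_mult)
  note R2 = L[OF m2 i2 b2 _ v2]
  show "integrable (lborel \<Otimes>\<^sub>M lborel) (\<lambda>(x,y). normal_density \<mu> s2 x * (x * normal_density (\<alpha>+\<beta>*x) s3 y))"
    "integral\<^sup>L (lborel \<Otimes>\<^sub>M lborel) (\<lambda>(x,y). normal_density \<mu> s2 x * (x * normal_density (\<alpha>+\<beta>*x) s3 y)) = \<mu>"
    "(\<integral>z. \<bar>(\<lambda>(x,y). normal_density \<mu> s2 x * (x * normal_density (\<alpha>+\<beta>*x) s3 y)) z\<bar> \<partial>(lborel \<Otimes>\<^sub>M lborel)) \<le> s2 + 1*\<bar>\<mu>\<bar>"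
    using R2 by (auto simp: algebra_simps)
  have m3: "(\<lambda>(x,y). normal_density (\<alpha>+\<beta>*x) s3 y * y) \<in> borel_measurable (lborel \<Otimes>\<^sub>M lborel)"
    unfolding normal_density_def by measurable
  have i3: "\<And>x. integrable lborel (\<lambda>y. normal_density (\<alpha>+\<beta>*x) s3 y * y)"
    using integrable_normal_moment_nz_1[OF s3] by simp
  have v3: "\<And>x. (\<integral>y. normal_density (\<alpha>+\<beta>*x) s3 y * y \<partial>lborel) = \<alpha> + \<beta>*x"
    using integral_normal_moment_nz_1[OF s3] by simp
  have b3: "(\<integral>y. \<bar>normal_density (\<alpha>+\<beta>*x) s3 y * y\<bar> \<partial>lborel) \<le> (\<bar>\<alpha>\<bar> + s3) + \<bar>\<beta>\<bar>*\<bar>x\<bar>" for x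
  proof -
    have "(\<integral>y. \<bar>normal_density (\<alpha>+\<beta>*x) s3 y * y\<bar> \<partial>lborel) = (\<integral>y. normal_density (\<alpha>+\<beta>*x) s3 y * \<bar>y\<bar> \<partial>lborel)"
      by (simp add: abs_mult)
    also have "\<dots> \<le> \<bar>\<alpha>+\<beta>*x\<bar> + s3" by (rule nd_abs(2)[OF s3])
    also have "\<dots> \<le> (\<bar>\<alpha>\<bar> + s3) + \<bar>\<beta>\<bar>*\<bar>x\<bar>" by (simp add: abs_mult[symmetric] abs_triangle_ineq)
    finally show ?thesis .
  qed
  note R3 = L[OF m3 i3 b3 _ v3]
  show "integrable (lborel \<Otimes>\<^sub>M lborel) (\<lambda>(x,y). normal_density \<mu> s2 x * (normal_density (\<alpha>+\<beta>*x) s3 y * y))"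
    "integral\<^sup>L (lborel \<Otimes>\<^sub>M lborel) (\<lambda>(x,y). normal_density \<mu> s2 x * (normal_density (\<alpha>+\<beta>*x) s3 y * y)) = \<alpha> + \<beta>*\<mu>"
    "(\<integral>z. \<bar>(\<lambda>(x,y). normal_density \<mu> s2 x * (normal_density (\<alpha>+\<beta>*x) s3 y * y)) z\<bar> \<partial>(lborel \<Otimes>\<^sub>M lborel)) \<le> (\<bar>\<alpha>\<bar> + s3 + \<bar>\<beta>\<bar> * s2) + \<bar>\<beta>\<bar>*\<bar>\<mu>\<bar>"
    using R3[of \<mu>] by (auto simp: algebra_simps)
qed

lemma three_d:
  assumes s1: "0 < s1" and s2: "0 < s2" and s3: "0 < s3"
  shows "integrable (lborel \<Otimes>\<^sub>M (lborel \<Otimes>\<^sub>M lborel)) (\<lambda>(a,z). normal_density 0 s1 a * (\<lambda>(x,y). normal_density (k2*a) s2 x * normal_density (l1*a+l2*x) s3 y) z)"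
    "integral\<^sup>L (lborel \<Otimes>\<^sub>M (lborel \<Otimes>\<^sub>M lborel)) (\<lambda>(a,z). normal_density 0 s1 a * (\<lambda>(x,y). normal_density (k2*a) s2 x * normal_density (l1*a+l2*x) s3 y) z) = 1"
    "integrable (lborel \<Otimes>\<^sub>M (lborel \<Otimes>\<^sub>M lborel)) (\<lambda>(a,z). normal_density 0 s1 a * (\<lambda>(x,y). normal_density (k2*a) s2 x * (x * normal_density (l1*a+l2*x) s3 y)) z)"
    "integral\<^sup>L (lborel \<Otimes>\<^sub>M (lborel \<Otimes>\<^sub>M lborel)) (\<lambda>(a,z). normal_density 0 s1 a * (\<lambda>(x,y). normal_density (k2*a) s2 x * (x * normal_density (l1*a+l2*x) s3 y)) z) = 0"
    "integrable (lborel \<Otimes>\<^sub>M (lborel \<Otimes>\<^sub>M lborel)) (\<lambda>(a,z). normal_density 0 s1 a * (\<lambda>(x,y). normal_density (k2*a) s2 x * (normal_density (l1*a+l2*x) s3 y * y)) z)"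
    "integral\<^sup>L (lborel \<Otimes>\<^sub>M (lborel \<Otimes>\<^sub>M lborel)) (\<lambda>(a,z). normal_density 0 s1 a * (\<lambda>(x,y). normal_density (k2*a) s2 x * (normal_density (l1*a+l2*x) s3 y * y)) z) = 0"
proof -
  note L = layer[OF sf_lborel2 s1, of _ _ _ _ _ 0]
  note T = two_d[OF s2 s3]
  have m1: "(\<lambda>(a,z). (\<lambda>(x,y). normal_density (k2*a) s2 x * normal_density (l1*a+l2*x) s3 y) z) \<in> borel_measurable (lborel \<Otimes>\<^sub>M (lborel \<Otimes>\<^sub>M lborel))"
    unfolding normal_density_def by measurable
  have b1: "\<And>a. (\<integral>z. \<bar>(\<lambda>(x,y). normal_density (k2*a) s2 x * normal_density (l1*a+l2*x) s3 y) z\<bar> \<partial>(lborel \<Otimes>\<^sub>M lborel)) \<le> 1 + 0*\<bar>a\<bar>"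
    using T(3) by simp
  have v1: "\<And>a. integral\<^sup>L (lborel \<Otimes>\<^sub>M lborel) (\<lambda>(x,y). normal_density (k2*a) s2 x * normal_density (l1*a+l2*x) s3 y) = 1 + 0*a"
    using T(2) by simp
  note R1 = L[OF m1 T(1) b1 _ v1]
  show "integrable (lborel \<Otimes>\<^sub>M (lborel \<Otimes>\<^sub>M lborel)) (\<lambda>(a,z). normal_density 0 s1 a * (\<lambda>(x,y). normal_density (k2*a) s2 x * normal_density (l1*a+l2*x) s3 y) z)"
    "integral\<^sup>L (lborel \<Otimes>\<^sub>M (lborel \<Otimes>\<^sub>M lborel)) (\<lambda>(a,z). normal_density 0 s1 a * (\<lambda>(x,y). normal_density (k2*a) s2 x * normal_density (l1*a+l2*x) s3 y) z) = 1"
    using R1 by auto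
  have m2: "(\<lambda>(a,z). (\<lambda>(x,y). normal_density (k2*a) s2 x * (x * normal_density (l1*a+l2*x) s3 y)) z) \<in> borel_measurable (lborel \<Otimes>\<^sub>M (lborel \<Otimes>\<^sub>M lborel))"
    unfolding normal_density_def by measurable
  have b2: "(\<integral>z. \<bar>(\<lambda>(x,y). normal_density (k2*a) s2 x * (x * normal_density (l1*a+l2*x) s3 y)) z\<bar> \<partial>(lborel \<Otimes>\<^sub>M lborel)) \<le> s2 + \<bar>k2\<bar>*\<bar>a\<bar>" for a
    using T(6)[of "k2*a" "l1*a" l2] by (simp add: abs_mult)
  have v2: "\<And>a. integral\<^sup>L (lborel \<Otimes>\<^sub>M lborel) (\<lambda>(x,y). normal_density (k2*a) s2 x * (x * normal_density (l1*a+l2*x) s3 y)) = 0 + k2*a"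
    using T(5) by simp
  note R2 = L[OF m2 T(4) b2 _ v2]
  show "integrable (lborel \<Otimes>\<^sub>M (lborel \<Otimes>\<^sub>M lborel)) (\<lambda>(a,z). normal_density 0 s1 a * (\<lambda>(x,y). normal_density (k2*a) s2 x * (x * normal_density (l1*a+l2*x) s3 y)) z)"
    "integral\<^sup>L (lborel \<Otimes>\<^sub>M (lborel \<Otimes>\<^sub>M lborel)) (\<lambda>(a,z). normal_density 0 s1 a * (\<lambda>(x,y). normal_density (k2*a) s2 x * (x * normal_density (l1*a+l2*x) s3 y)) z) = 0"
    using R2 by auto
  have m3: "(\<lambda>(a,z). (\<lambda>(x,y). normal_density (k2*a) s2 x * (normal_density (l1*a+l2*x) s3 y * y)) z) \<in> borel_measurable (lborel \<Otimes>\<^sub>M (lborel \<Otimes>\<^sub>M lborel))"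
    unfolding normal_density_def by measurable
  have b3: "(\<integral>z. \<bar>(\<lambda>(x,y). normal_density (k2*a) s2 x * (normal_density (l1*a+l2*x) s3 y * y)) z\<bar> \<partial>(lborel \<Otimes>\<^sub>M lborel)) \<le> (s3 + \<bar>l2\<bar> * s2) + (\<bar>l1\<bar> + \<bar>l2\<bar>*\<bar>k2\<bar>)*\<bar>a\<bar>" for a
    using T(9)[of "k2*a" "l1*a" l2] by (simp add: abs_mult algebra_simps)
  have v3: "integral\<^sup>L (lborel \<Otimes>\<^sub>M lborel) (\<lambda>(x,y). normal_density (k2*a) s2 x * (normal_density (l1*a+l2*x) s3 y * y)) = 0 + (l1 + l2*k2)*a" for a
    using T(8)[of "k2*a" "l1*a" l2] by (simp add: algebra_simps)
  note R3 = L[OF m3 T(7) b3 _ v3]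
  show "integrable (lborel \<Otimes>\<^sub>M (lborel \<Otimes>\<^sub>M lborel)) (\<lambda>(a,z). normal_density 0 s1 a * (\<lambda>(x,y). normal_density (k2*a) s2 x * (normal_density (l1*a+l2*x) s3 y * y)) z)"
    "integral\<^sup>L (lborel \<Otimes>\<^sub>M (lborel \<Otimes>\<^sub>M lborel)) (\<lambda>(a,z). normal_density 0 s1 a * (\<lambda>(x,y). normal_density (k2*a) s2 x * (normal_density (l1*a+l2*x) s3 y * y)) z) = 0"
    using R3 by auto
qed



theorem mainTheorem3:
  fixes S :: "real^3^3" and f2 :: "real \<Rightarrow> real" and fY :: "real \<times> real \<Rightarrow> real"
    and x1 :: real
  assumes "pos_definite S"
    and "continuous_on UNIV f2"
    and "continuous_on UNIV fY"
    and "integrable (noise S) (\<lambda>u. fY (x1, f2 x1 + fst (snd u)))"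
  shows "(\<integral>u. g_cond S fY x1 (f2 x1 + fst (snd u)) \<partial>noise S) - (\<integral>u. Y_do1 f2 fY x1 u \<partial>noise S)
           = cond_exp_U1 S (\<lambda>u. snd (snd u)) x1
       \<and> cond_exp_U1 S (\<lambda>u. snd (snd u)) x1 = S $ 3 $ 1 / S $ 1 $ 1 * x1
       \<and> f2 x1 = (\<integral>u. X2_do1 f2 x1 u \<partial>noise S)"
proof -
  obtain s1 s2 s3 k2 l1 l2 where s1: "0 < s1" and s2: "0 < s2" and s3: "0 < s3"
    and fac: "\<And>a b c. gauss_dens S (a,b,c) = normal_density 0 s1 a * (normal_density (k2*a) s2 b * normal_density (l1*a+l2*b) s3 c)"
    and cm: "l1 + l2*k2 = S$3$1 / S$1$1"
    using gauss_factor[OF assms(1)] by blast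
  have L3: "(lborel :: (real \<times> real \<times> real) measure) = lborel \<Otimes>\<^sub>M (lborel \<Otimes>\<^sub>M lborel)"
    by (simp add: lborel_prod)
  have L2: "(lborel :: (real \<times> real) measure) = lborel \<Otimes>\<^sub>M lborel"
    by (simp add: lborel_prod)
  note T3 = three_d[OF s1 s2 s3, of k2 l1 l2]
  note T2 = two_d[OF s2 s3, of "k2*x1" "l1*x1" l2]
  let ?G = "gauss_dens S"
  have G3: "?G = (\<lambda>(a,z). normal_density 0 s1 a * (\<lambda>(x,y). normal_density (k2*a) s2 x * normal_density (l1*a+l2*x) s3 y) z)"
    by (auto simp: fac fun_eq_iff)
  have G3b: "(\<lambda>u. ?G u * fst (snd u)) = (\<lambda>(a,z). normal_density 0 s1 a * (\<lambda>(x,y). normal_density (k2*a) s2 x * (x * normal_density (l1*a+l2*x) s3 y)) z)"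
    by (auto simp: fac fun_eq_iff algebra_simps)
  have G3c: "(\<lambda>u. ?G u * snd (snd u)) = (\<lambda>(a,z). normal_density 0 s1 a * (\<lambda>(x,y). normal_density (k2*a) s2 x * (normal_density (l1*a+l2*x) s3 y * y)) z)"
    by (auto simp: fac fun_eq_iff algebra_simps)
  have G2: "(\<lambda>w. ?G (x1,w)) = (\<lambda>w. normal_density 0 s1 x1 * (\<lambda>(x,y). normal_density (k2*x1) s2 x * normal_density (l1*x1+l2*x) s3 y) w)"
    by (auto simp: fac fun_eq_iff)
  have G2c: "(\<lambda>w. snd w * ?G (x1,w)) = (\<lambda>w. normal_density 0 s1 x1 * (\<lambda>(x,y). normal_density (k2*x1) s2 x * (normal_density (l1*x1+l2*x) s3 y * y)) w)"
    by (auto simp: fac fun_eq_iff algebra_simps)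
  have I0: "integrable lborel ?G" "integral\<^sup>L lborel ?G = 1"
    unfolding L3 G3 using T3 by auto
  have Ib: "integrable lborel (\<lambda>u. ?G u * fst (snd u))" "(\<integral>u. ?G u * fst (snd u) \<partial>lborel) = 0"
    unfolding L3 G3b using T3 by auto
  have Ic: "integrable lborel (\<lambda>u. ?G u * snd (snd u))" "(\<integral>u. ?G u * snd (snd u) \<partial>lborel) = 0"
    unfolding L3 G3c using T3 by auto
  have C0: "integrable lborel (\<lambda>w. ?G (x1,w))" "(\<integral>w. ?G (x1,w) \<partial>lborel) = normal_density 0 s1 x1"
    unfolding L2 G2 using T2 by auto
  have Cc: "integrable lborel (\<lambda>w. snd w * ?G (x1,w))" "(\<integral>w. snd w * ?G (x1,w) \<partial>lborel) = normal_density 0 s1 x1 * ((l1 + l2*k2)*x1)"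
    unfolding L2 G2c using T2 by (auto simp: algebra_simps)
  have ndpos: "0 < normal_density 0 s1 x1" by (rule normal_density_pos[OF s1])
  have ce: "cond_exp_U1 S (\<lambda>u. snd (snd u)) x1 = S $ 3 $ 1 / S $ 1 $ 1 * x1"
    unfolding cond_exp_U1_def using C0(2) Cc(2) ndpos cm by simp
  have gc: "g_cond S fY x1 x2 = fY (x1, x2) + S $ 3 $ 1 / S $ 1 $ 1 * x1" for x2
  proof -
    have "(\<lambda>w. Y_do2 fY x2 (x1, w) * ?G (x1, w)) = (\<lambda>w. fY (x1,x2) * ?G (x1,w) + snd w * ?G (x1,w))"
      by (auto simp: Y_do2_def X1_do2_def fun_eq_iff algebra_simps split: prod.split)
    then have "(\<integral>w. Y_do2 fY x2 (x1, w) * ?G (x1, w) \<partial>lborel) = fY (x1,x2) * normal_density 0 s1 x1 + normal_density 0 s1 x1 * ((l1 + l2*k2)*x1)"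
      using C0 Cc by (simp add: Bochner_Integration.integral_add)
    then show ?thesis unfolding g_cond_def cond_exp_U1_def cm[symmetric] using C0(2) ndpos
      by (simp add: field_simps)
  qed
  have Gnn: "\<And>u. 0 \<le> ?G u" by (auto simp: fac)
  have Gm: "?G \<in> borel_measurable lborel" using I0(1) by (rule borel_measurable_integrable)
  have ps: "prob_space (noise S)"
  proof
    have "emeasure (noise S) (space (noise S)) = (\<integral>\<^sup>+u. ennreal (?G u) \<partial>lborel)"
      unfolding noise_def using Gm by (simp add: emeasure_density)
    also have "\<dots> = ennreal (integral\<^sup>L lborel ?G)"
      using I0(1) Gnn by (intro nn_integral_eq_integral) auto
    finally show "emeasure (noise S) (space (noise S)) = 1" using I0(2) by simp
  qed
  then interpret P: prob_space "noise S" .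
  have snm: "(\<lambda>u::real\<times>real\<times>real. snd (snd u)) \<in> borel_measurable lborel" unfolding L3 by measurable
  have fsm: "(\<lambda>u::real\<times>real\<times>real. fst (snd u)) \<in> borel_measurable lborel" unfolding L3 by measurable
  have iuy: "integrable (noise S) (\<lambda>u. snd (snd u))"
    unfolding noise_def using Ic(1) Gm Gnn snm by (subst integrable_density) (auto simp: mult.commute)
  have euy: "(\<integral>u. snd (snd u) \<partial>noise S) = 0"
    unfolding noise_def using Ic(2) Gm Gnn snm by (subst integral_density) (auto simp: mult.commute)
  have iu2: "integrable (noise S) (\<lambda>u. fst (snd u))"
    unfolding noise_def using Ib(1) Gm Gnn fsm by (subst integrable_density) (auto simp: mult.commute)
  have eu2: "(\<integral>u. fst (snd u) \<partial>noise S) = 0"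
    unfolding noise_def using Ib(2) Gm Gnn fsm by (subst integral_density) (auto simp: mult.commute)
  let ?F = "\<lambda>u. fY (x1, f2 x1 + fst (snd u))"
  have e1: "(\<integral>u. g_cond S fY x1 (f2 x1 + fst (snd u)) \<partial>noise S) = (\<integral>u. ?F u \<partial>noise S) + S $ 3 $ 1 / S $ 1 $ 1 * x1"
    unfolding gc using assms(4) by (simp add: Bochner_Integration.integral_add P.prob_space)
  have "(\<lambda>u. Y_do1 f2 fY x1 u) = (\<lambda>u. ?F u + snd (snd u))"
    by (auto simp: Y_do1_def X2_do1_def fun_eq_iff split: prod.split)
  then have e2: "(\<integral>u. Y_do1 f2 fY x1 u \<partial>noise S) = (\<integral>u. ?F u \<partial>noise S)"
    using assms(4) iuy euy by (simp add: Bochner_Integration.integral_add)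
  have "(\<lambda>u. X2_do1 f2 x1 u) = (\<lambda>u. f2 x1 + fst (snd u))"
    by (auto simp: X2_do1_def fun_eq_iff split: prod.split)
  then have e3: "(\<integral>u. X2_do1 f2 x1 u \<partial>noise S) = f2 x1"
    using iu2 eu2 by (simp add: Bochner_Integration.integral_add P.prob_space)
  show ?thesis using e1 e2 e3 ce by simp
qed

end
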